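(* Let $X$ be a compact metric space and let $f\colon X\to X$ be a homeomorphism which is positively $n$-expansive (for some integer $n\geq 1$) and has the L-shadowing property. Then $X$ is finite.
   Context: Let $(X,d)$ be a metric space and $f\colon X\to X$. For $x\in X$ and $c>0$, the local stable set of size $c$ is $W^s_c(x)=\{y\in X: d(f^k(y),f^k(x))\leq c \text{ for every } k\geq 0\}$. The map $f$ is positively $n$-expansive if there exists $c>0$ such that for every $x\in X$ the set $W^s_c(x)$ contains at most $n$ distinct points. For $\delta>0$, a sequence $(x_k)_{k\in\mathbb{Z}}\subset X$ is a $\delta$-pseudo orbit if $d(f(x_k),x_{k+1})<\delta$ for all $k$; it is a two-sided limit pseudo orbit if $d(f(x_k),x_{k+1})\to 0$ as $|k|\to\infty$. A point $z$ $\varepsilon$-shadows $(x_k)_{k\in\mathbb{Z}}$ if $d(f^k(z),x_k)<\varepsilon$ for all $k\in\mathbb{Z}$, and $z$ two-sided limit shadows $(x_k)$ if $d(f^k(z),x_k)\to0$ as $|k|\to\infty$. A homeomorphism $f$ has the L-shadowing property if for every $\varepsilon>0$ there is $\delta>0$ such that every $\delta$-pseudo orbit $(x_k)_{k\in\mathbb{Z}}$ which is also a two-sided limit pseudo orbit is both $\varepsilon$-shadowed and two-sided limit shadowed by one and the same point $z\in X$. *)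

theory Defs
  imports "HOL-Analysis.Analysis"
begin

definition local_stable_set :: "('a::metric_space \<Rightarrow> 'a) \<Rightarrow> real \<Rightarrow> 'a \<Rightarrow> 'a set" where
  "local_stable_set f c x = {y. \<forall>k::nat. dist ((f ^^ k) y) ((f ^^ k) x) \<le> c}"

definition pos_n_expansive :: "nat \<Rightarrow> ('a::metric_space \<Rightarrow> 'a) \<Rightarrow> bool" where
  "pos_n_expansive n f \<longleftrightarrow>
     (\<exists>c>0. \<forall>x. finite (local_stable_set f c x) \<and> card (local_stable_set f c x) \<le> n)"

definition int_iter :: "('a \<Rightarrow> 'a) \<Rightarrow> int \<Rightarrow> 'a \<Rightarrow> 'a" where
  "int_iter f k = (if k \<ge> 0 then f ^^ nat k else (inv f) ^^ nat (- k))"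

definition pseudo_orbit :: "('a::metric_space \<Rightarrow> 'a) \<Rightarrow> real \<Rightarrow> (int \<Rightarrow> 'a) \<Rightarrow> bool" where
  "pseudo_orbit f \<delta> xs \<longleftrightarrow> (\<forall>k. dist (f (xs k)) (xs (k + 1)) < \<delta>)"

definition two_sided_limit_pseudo_orbit :: "('a::metric_space \<Rightarrow> 'a) \<Rightarrow> (int \<Rightarrow> 'a) \<Rightarrow> bool" where
  "two_sided_limit_pseudo_orbit f xs \<longleftrightarrow>
     ((\<lambda>k. dist (f (xs k)) (xs (k + 1))) \<longlongrightarrow> 0) at_top \<and>
     ((\<lambda>k. dist (f (xs k)) (xs (k + 1))) \<longlongrightarrow> 0) at_bot"

definition eps_shadows :: "('a::metric_space \<Rightarrow> 'a) \<Rightarrow> real \<Rightarrow> 'a \<Rightarrow> (int \<Rightarrow> 'a) \<Rightarrow> bool" where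
  "eps_shadows f \<epsilon> z xs \<longleftrightarrow> (\<forall>k. dist (int_iter f k z) (xs k) < \<epsilon>)"

definition two_sided_limit_shadows :: "('a::metric_space \<Rightarrow> 'a) \<Rightarrow> 'a \<Rightarrow> (int \<Rightarrow> 'a) \<Rightarrow> bool" where
  "two_sided_limit_shadows f z xs \<longleftrightarrow>
     ((\<lambda>k. dist (int_iter f k z) (xs k)) \<longlongrightarrow> 0) at_top \<and>
     ((\<lambda>k. dist (int_iter f k z) (xs k)) \<longlongrightarrow> 0) at_bot"

definition L_shadowing :: "('a::metric_space \<Rightarrow> 'a) \<Rightarrow> bool" where
  "L_shadowing f \<longleftrightarrow>
     (\<forall>\<epsilon>>0. \<exists>\<delta>>0. \<forall>xs. pseudo_orbit f \<delta> xs \<and> two_sided_limit_pseudo_orbit f xs \<longrightarrow>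
        (\<exists>z. eps_shadows f \<epsilon> z xs \<and> two_sided_limit_shadows f z xs))"

end

theory Submission
  imports Defs
begin

lemma int_iter_nat: "int_iter f (int k) x = (f^^k) x"
  by (simp add: int_iter_def)

lemma int_iter_succ:
  assumes "surj f" shows "int_iter f (k+1) x = f (int_iter f k x)"
proof (cases "k \<ge> 0")
  case True
  then have "nat (k+1) = Suc (nat k)" by simp
  with True show ?thesis by (simp add: int_iter_def)
next
  case False
  show ?thesis
  proof (cases "k = -1")
    case True
    then show ?thesis by (simp add: int_iter_def surj_f_inv_f[OF assms])
  next
    case False
    with \<open>\<not> k \<ge> 0\<close> have k: "k + 1 < 0" by simp
    then have "nat (-k) = Suc (nat (-(k+1)))" by simp
    then show ?thesis using k \<open>\<not> k \<ge> 0\<close>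
      by (simp add: int_iter_def surj_f_inv_f[OF assms])
  qed
qed

lemma int_iter_pred:
  assumes "bij f" shows "int_iter f (k-1) x = inv f (int_iter f k x)"
proof -
  have "int_iter f k x = f (int_iter f (k-1) x)"
    using int_iter_succ[of f "k-1" x] assms by (simp add: bij_def)
  then show ?thesis using assms by (simp add: bij_def inv_f_f)
qed

lemma int_iter_add:
  assumes "bij f" shows "int_iter f a (int_iter f b x) = int_iter f (a+b) x"
proof (induction a rule: int_induct[where k=0])
  case base
  then show ?case by (simp add: int_iter_def)
next
  case (step1 i)
  then show ?case using int_iter_succ[of f] assms
    by (metis add.commute add.left_commute bij_def)
next
  case (step2 i)
  then show ?case using int_iter_pred[OF assms]
    by (metis add_diff_eq diff_add_eq)
qed

lemma multi_subseq:
  fixes s :: "nat \<Rightarrow> nat \<Rightarrow> 'a::metric_space"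
  assumes "compact (UNIV :: 'a set)"
  shows "\<exists>r. strict_mono r \<and> (\<forall>i<n. \<exists>L. (\<lambda>k. s (r k) i) \<longlonglongrightarrow> L)"
proof (induction n)
  case 0
  show ?case by (rule exI[of _ id]) (simp add: strict_mono_def)
next
  case (Suc n)
  then obtain r where r: "strict_mono r" "\<forall>i<n. \<exists>L. (\<lambda>k. s (r k) i) \<longlonglongrightarrow> L" by blast
  have "seq_compact (UNIV :: 'a set)" using assms compact_imp_seq_compact by blast
  then obtain l r' where r': "strict_mono (r' :: nat \<Rightarrow> nat)" "((\<lambda>k. s (r k) n) \<circ> r') \<longlonglongrightarrow> l"
    by (rule seq_compactE) auto
  have "\<forall>i<Suc n. \<exists>L. (\<lambda>k. s ((r \<circ> r') k) i) \<longlonglongrightarrow> L"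
  proof (intro allI impI)
    fix i assume "i < Suc n"
    show "\<exists>L. (\<lambda>k. s ((r \<circ> r') k) i) \<longlonglongrightarrow> L"
    proof (cases "i = n")
      case True then show ?thesis using r' by (auto simp: o_def)
    next
      case False
      then obtain L where L: "(\<lambda>k. s (r k) i) \<longlonglongrightarrow> L" using r \<open>i < Suc n\<close> by (meson less_SucE)
      have "((\<lambda>k. s (r k) i) \<circ> r') \<longlonglongrightarrow> L" using LIMSEQ_subseq_LIMSEQ[OF L r'(1)] .
      then show ?thesis by (auto simp: o_def)
    qed
  qed
  moreover have "strict_mono (r \<circ> r')" using r(1) r'(1) by (rule strict_mono_o)
  ultimately show ?case by blast
qed

lemma continuous_funpow:
  fixes f :: "'a::topological_space \<Rightarrow> 'a"
  assumes "continuous_on UNIV f" shows "continuous_on UNIV (f^^j)"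
proof (induction j)
  case 0 have "(f ^^ 0) = (\<lambda>x. x)" by (rule ext) simp
  then show ?case by (simp add: continuous_on_id)
next
  case (Suc j)
  have "continuous_on UNIV (f \<circ> (f^^j))"
    using continuous_on_compose[OF Suc continuous_on_subset[OF assms]] by simp
  then show ?case by simp
qed

lemma unif:
  fixes f :: "'a::metric_space \<Rightarrow> 'a"
  assumes cpt: "compact (UNIV :: 'a set)" and cont: "continuous_on UNIV f"
    and exp: "\<forall>x. finite (local_stable_set f c x) \<and> card (local_stable_set f c x) \<le> n"
    and g: "\<gamma> > 0"
  shows "\<exists>N. \<forall>u::nat\<Rightarrow>'a. (\<forall>i\<le>n. \<forall>j\<le>N. dist ((f^^j) (u i)) ((f^^j) (u 0)) \<le> c)
           \<longrightarrow> (\<exists>i\<le>n. \<exists>l\<le>n. i \<noteq> l \<and> dist (u i) (u l) < \<gamma>)"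
proof (rule ccontr)
  assume "\<not> ?thesis"
  then have "\<forall>N. \<exists>u. (\<forall>i\<le>n. \<forall>j\<le>N. dist ((f^^j) (u i)) ((f^^j) (u 0)) \<le> c)
           \<and> (\<forall>i\<le>n. \<forall>l\<le>n. i \<noteq> l \<longrightarrow> dist (u i) (u l) \<ge> \<gamma>)"
    by (meson not_less)
  then obtain s where s: "\<And>N. (\<forall>i\<le>n. \<forall>j\<le>N. dist ((f^^j) (s N i)) ((f^^j) (s N 0)) \<le> c)"
     "\<And>N. (\<forall>i\<le>n. \<forall>l\<le>n. i \<noteq> l \<longrightarrow> dist (s N i) (s N l) \<ge> \<gamma>)"
    by metis
  obtain r where r: "strict_mono r" "\<forall>i<Suc n. \<exists>L. (\<lambda>k. s (r k) i) \<longlonglongrightarrow> L"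
    using multi_subseq[OF cpt] by blast
  then obtain v where v: "\<And>i. i \<le> n \<Longrightarrow> (\<lambda>k. s (r k) i) \<longlonglongrightarrow> v i"
    by (metis less_Suc_eq_le)
  have sep: "dist (v i) (v l) \<ge> \<gamma>" if "i \<le> n" "l \<le> n" "i \<noteq> l" for i l
  proof -
    have "(\<lambda>k. dist (s (r k) i) (s (r k) l)) \<longlonglongrightarrow> dist (v i) (v l)"
      using v that by (intro tendsto_dist) auto
    then show ?thesis
      by (rule LIMSEQ_le_const) (use s(2) that in auto)
  qed
  have stab: "dist ((f^^j) (v i)) ((f^^j) (v 0)) \<le> c" if "i \<le> n" for i j
  proof -
    have cj: "continuous_on UNIV (f^^j)" using continuous_funpow[OF cont] .
    have t1: "(\<lambda>k. (f^^j) (s (r k) i)) \<longlonglongrightarrow> (f^^j) (v i)"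
      using continuous_on_tendsto_compose[OF cj v[OF that]] by simp
    have t2: "(\<lambda>k. (f^^j) (s (r k) 0)) \<longlonglongrightarrow> (f^^j) (v 0)"
      using continuous_on_tendsto_compose[OF cj v[of 0]] by simp
    have "(\<lambda>k. dist ((f^^j) (s (r k) i)) ((f^^j) (s (r k) 0))) \<longlonglongrightarrow> dist ((f^^j) (v i)) ((f^^j) (v 0))"
      by (intro tendsto_dist t1 t2)
    then show ?thesis
    proof (rule LIMSEQ_le_const2)
      show "\<exists>N. \<forall>k\<ge>N. dist ((f^^j) (s (r k) i)) ((f^^j) (s (r k) 0)) \<le> c"
      proof (intro exI allI impI)
        fix k assume "j \<le> k"
        then have "j \<le> r k" using seq_suble[OF r(1), of k] by linarith
        then show "dist ((f^^j) (s (r k) i)) ((f^^j) (s (r k) 0)) \<le> c" using s(1) that by blast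
      qed
    qed
  qed
  have sub: "v ` {..n} \<subseteq> local_stable_set f c (v 0)"
    using stab by (auto simp: local_stable_set_def)
  have inj: "inj_on v {..n}"
  proof (rule inj_onI)
    fix i l assume "i \<in> {..n}" "l \<in> {..n}" "v i = v l"
    then show "i = l" using sep[of i l] g by fastforce
  qed
  have "Suc n = card (v ` {..n})" using card_image[OF inj] by simp
  also have "\<dots> \<le> card (local_stable_set f c (v 0))"
    using exp sub by (intro card_mono) auto
  also have "\<dots> \<le> n" using exp by auto
  finally show False by simp
qed

lemma shadow_point:
  fixes f :: "'a::metric_space \<Rightarrow> 'a"
  assumes bij: "bij f" and sh: "\<forall>xs. pseudo_orbit f \<delta> xs \<and> two_sided_limit_pseudo_orbit f xs \<longrightarrow>
        (\<exists>z. eps_shadows f \<epsilon> z xs \<and> two_sided_limit_shadows f z xs)"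
    and d: "dist (f y') (f y) < \<delta>" and dy: "dist y' y \<le> \<epsilon>" and c: "2 * \<epsilon> \<le> c"
  shows "\<exists>z. z \<in> local_stable_set f c y \<and> (\<forall>k::nat. dist (int_iter f (- int k) z) (int_iter f (- int k) y') < \<epsilon>)"
proof -
  have surj: "surj f" using bij by (simp add: bij_def)
  define xs where "xs k = (if k \<le> 0 then int_iter f k y' else int_iter f k y)" for k
  have jump: "dist (f (xs k)) (xs (k+1)) = (if k = 0 then dist (f y') (f y) else 0)" for k
  proof -
    consider "k < 0" | "k = 0" | "k > 0" by linarith
    then show ?thesis
    proof cases
      case 1
      then show ?thesis by (simp add: xs_def int_iter_succ[OF surj])
    next
      case 2
      then show ?thesis by (simp add: xs_def int_iter_def)
    next
      case 3
      then show ?thesis by (simp add: xs_def int_iter_succ[OF surj])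
    qed
  qed
  have po: "pseudo_orbit f \<delta> xs"
    unfolding pseudo_orbit_def
  proof
    fix k
    have "0 < \<delta>" using d zero_le_dist[of "f y'" "f y"] by linarith
    then show "dist (f (xs k)) (xs (k + 1)) < \<delta>" using d by (simp add: jump)
  qed
  have ev1: "eventually (\<lambda>k. dist (f (xs k)) (xs (k+1)) = 0) at_top"
    using eventually_ge_at_top[of "1::int"] by eventually_elim (simp add: jump)
  have ev2: "eventually (\<lambda>k. dist (f (xs k)) (xs (k+1)) = 0) at_bot"
    using eventually_le_at_bot[of "-1::int"] by eventually_elim (simp add: jump)
  have tl: "two_sided_limit_pseudo_orbit f xs"
    unfolding two_sided_limit_pseudo_orbit_def
    using tendsto_eventually[OF ev1] tendsto_eventually[OF ev2] by simp
  obtain z where z: "eps_shadows f \<epsilon> z xs" using sh po tl by blast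
  then have zk: "\<And>k. dist (int_iter f k z) (xs k) < \<epsilon>" by (simp add: eps_shadows_def)
  have "z \<in> local_stable_set f c y"
    unfolding local_stable_set_def
  proof (intro CollectI allI)
    fix k :: nat
    show "dist ((f^^k) z) ((f^^k) y) \<le> c"
    proof (cases "k = 0")
      case True
      have "dist z y' < \<epsilon>" using zk[of 0] by (simp add: xs_def int_iter_def)
      then have "dist z y < 2 * \<epsilon>" using dy dist_triangle[of z y y'] by linarith
      then show ?thesis using True c by simp
    next
      case False
      have "dist (int_iter f (int k) z) (xs (int k)) < \<epsilon>" by (rule zk)
      then have "dist ((f^^k) z) ((f^^k) y) < \<epsilon>" using False
        by (simp add: xs_def int_iter_nat)
      moreover have "\<epsilon> \<le> c" using c zero_le_dist[of "int_iter f 0 z" "xs 0"] zk[of 0] by linarith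
      ultimately show ?thesis by simp
    qed
  qed
  moreover have "\<forall>k::nat. dist (int_iter f (- int k) z) (int_iter f (- int k) y') < \<epsilon>"
  proof
    fix k :: nat
    have "dist (int_iter f (- int k) z) (xs (- int k)) < \<epsilon>" by (rule zk)
    then show "dist (int_iter f (- int k) z) (int_iter f (- int k) y') < \<epsilon>" by (simp add: xs_def)
  qed
  ultimately show ?thesis by blast
qed

theorem theoremA:
  fixes f :: "'a::metric_space \<Rightarrow> 'a" and n :: nat
  assumes "compact (UNIV :: 'a set)"
    and "\<exists>g. homeomorphism UNIV UNIV f g"
    and "n \<ge> 1"
    and "pos_n_expansive n f"
    and "L_shadowing f"
  shows "finite (UNIV :: 'a set)"
proof (rule ccontr)
  assume inf: "\<not> finite (UNIV :: 'a set)"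
  note cpt = assms(1)
  obtain g where hom: "homeomorphism UNIV UNIV f g" using assms(2) by blast
  have cont: "continuous_on UNIV f" using hom by (simp add: homeomorphism_def)
  have bij: "bij f" using hom
    by (intro o_bij[of g]) (auto simp: homeomorphism_def fun_eq_iff)
  obtain c where c: "c > 0" and exp: "\<forall>x. finite (local_stable_set f c x) \<and> card (local_stable_set f c x) \<le> n"
    using assms(4) by (auto simp: pos_n_expansive_def)
  define \<epsilon> where "\<epsilon> = c / 3"
  have eps: "\<epsilon> > 0" "2 * \<epsilon> \<le> c" using c by (auto simp: \<epsilon>_def)
  obtain \<delta> where dl: "\<delta> > 0" and sh: "\<forall>xs. pseudo_orbit f \<delta> xs \<and> two_sided_limit_pseudo_orbit f xs \<longrightarrow>
        (\<exists>z. eps_shadows f \<epsilon> z xs \<and> two_sided_limit_shadows f z xs)"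
    using assms(5) eps(1) unfolding L_shadowing_def by blast
  have "uniformly_continuous_on UNIV f" using compact_uniformly_continuous[OF cont cpt] .
  then obtain \<rho>0 where r0: "\<rho>0 > 0" "\<And>a b. dist a b < \<rho>0 \<Longrightarrow> dist (f a) (f b) < \<delta>"
  proof -
    have "\<exists>d>0. \<forall>x\<in>UNIV. \<forall>x'\<in>UNIV. dist x' x < d \<longrightarrow> dist (f x') (f x) < \<delta>"
      using \<open>uniformly_continuous_on UNIV f\<close> dl unfolding uniformly_continuous_on_def by blast
    then show ?thesis using that by blast
  qed
  define \<rho> where "\<rho> = min \<rho>0 \<epsilon>"
  have rho: "\<rho> > 0" using r0 eps by (simp add: \<rho>_def)
  have key: "\<exists>z. z \<in> local_stable_set f c y \<and> (\<forall>k::nat. dist (int_iter f (- int k) z) (int_iter f (- int k) y') < \<epsilon>)"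
    if "dist y' y < \<rho>" for y y'
    using shadow_point[OF bij sh, of y' y c] r0(2)[of y' y] that eps
    by (simp add: \<rho>_def)
  have cov: "(UNIV :: 'a set) \<subseteq> (\<Union>y\<in>UNIV. ball y \<rho>)" using rho by auto
  obtain Y :: "'a set" where Y: "finite Y" "(UNIV :: 'a set) \<subseteq> (\<Union>y\<in>Y. ball y \<rho>)"
  proof -
    have "\<exists>Y. finite Y \<and> (UNIV :: 'a set) \<subseteq> (\<Union>y\<in>Y. ball y \<rho>)"
    proof (rule compactE_image[OF cpt _ cov])
      show "\<And>T. T \<in> UNIV \<Longrightarrow> open (ball T \<rho>)" by simp
    next
      fix C' :: "'a set" assume "finite C'" "UNIV \<subseteq> (\<Union>y\<in>C'. ball y \<rho>)"
      then show "\<exists>Y. finite Y \<and> (UNIV :: 'a set) \<subseteq> (\<Union>y\<in>Y. ball y \<rho>)" by blast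
    qed
    then show ?thesis using that by blast
  qed
  define B where "B = Sigma Y (\<lambda>y. local_stable_set f c y)"
  have finB: "finite B" unfolding B_def using Y(1) exp by (intro finite_SigmaI) auto
  have "\<forall>q. \<exists>b. b \<in> B \<and> (\<forall>k::nat. dist (int_iter f (- int k) (snd b)) (int_iter f (- int k) q) < \<epsilon>)"
  proof
    fix q
    have "q \<in> (\<Union>y\<in>Y. ball y \<rho>)" using Y(2) by blast
    then obtain y where y: "y \<in> Y" "dist y q < \<rho>" by auto
    then obtain z where "z \<in> local_stable_set f c y" "\<forall>k::nat. dist (int_iter f (- int k) z) (int_iter f (- int k) q) < \<epsilon>"
      using key[of q y] by (auto simp: dist_commute)
    then show "\<exists>b. b \<in> B \<and> (\<forall>k::nat. dist (int_iter f (- int k) (snd b)) (int_iter f (- int k) q) < \<epsilon>)"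
      using y by (intro exI[of _ "(y,z)"]) (auto simp: B_def)
  qed
  then obtain bk where bk0: "\<forall>q. bk q \<in> B \<and> (\<forall>k::nat. dist (int_iter f (- int k) (snd (bk q))) (int_iter f (- int k) q) < \<epsilon>)"
    by (rule choice[THEN exE]) blast
  then have bk: "\<And>q. bk q \<in> B"
    "\<And>q k. dist (int_iter f (- int k) (snd (bk q))) (int_iter f (- int k) q) < \<epsilon>"
    by auto
  obtain P :: "'a set" where P: "finite P" "card P = card B * n + 1"
    using infinite_arbitrarily_large[OF inf] by blast
  define D where "D = (\<lambda>(a,b). dist a b) ` {p \<in> P \<times> P. fst p \<noteq> snd p}"
  have finD: "finite D" using P(1) by (simp add: D_def)
  define \<gamma> where "\<gamma> = (if D = {} then 1 else Min D)"
  have gpos: "\<gamma> > 0"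
    using finD by (auto simp: \<gamma>_def D_def)
  have gle: "\<gamma> \<le> dist a b" if "a \<in> P" "b \<in> P" "a \<noteq> b" for a b
  proof -
    have "dist a b \<in> D" using that by (force simp: D_def)
    then show ?thesis using finD by (auto simp: \<gamma>_def)
  qed
  obtain N where N: "\<forall>u::nat\<Rightarrow>'a. (\<forall>i\<le>n. \<forall>j\<le>N. dist ((f^^j) (u i)) ((f^^j) (u 0)) \<le> c)
           \<longrightarrow> (\<exists>i\<le>n. \<exists>l\<le>n. i \<noteq> l \<and> dist (u i) (u l) < \<gamma>)"
    using unif[OF cpt cont exp gpos] by blast
  define h where "h p = bk ((f^^N) p)" for p
  have "\<exists>b\<in>B. n < card {p\<in>P. h p = b}"
  proof (rule ccontr)
    assume "\<not> ?thesis"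
    then have le: "\<And>b. b \<in> B \<Longrightarrow> card {p\<in>P. h p = b} \<le> n" by auto
    have "P \<subseteq> (\<Union>b\<in>B. {p\<in>P. h p = b})" using bk(1) by (auto simp: h_def)
    then have "card P \<le> card (\<Union>b\<in>B. {p\<in>P. h p = b})"
      using P(1) finB by (intro card_mono) auto
    also have "\<dots> \<le> (\<Sum>b\<in>B. card {p\<in>P. h p = b})" using card_UN_le[OF finB] .
    also have "\<dots> \<le> (\<Sum>b\<in>B. n)" using le by (intro sum_mono) auto
    also have "\<dots> = card B * n" by simp
    finally show False using P(2) by simp
  qed
  then obtain b where b: "b \<in> B" "n < card {p\<in>P. h p = b}" by blast
  define F where "F = {p\<in>P. h p = b}"
  have finF: "finite F" using P(1) by (simp add: F_def)
  obtain xs where xs: "set xs = F" "distinct xs" using finite_distinct_list[OF finF] by blast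
  have len: "n < length xs" using b(2) distinct_card[OF xs(2)] xs(1) by (simp add: F_def)
  define u where "u i = xs ! i" for i
  have uF: "u i \<in> F" if "i \<le> n" for i using that len xs(1) by (auto simp: u_def)
  have uinj: "u i \<noteq> u l" if "i \<le> n" "l \<le> n" "i \<noteq> l" for i l
    using that len xs(2) by (simp add: u_def nth_eq_iff_index_eq)
  have backw: "(f^^j) p = int_iter f (- int (N - j)) ((f^^N) p)" if "j \<le> N" for p j
  proof -
    have "int_iter f (- int (N - j)) ((f^^N) p) = int_iter f (- int (N - j)) (int_iter f (int N) p)"
      by (simp add: int_iter_nat)
    also have "\<dots> = int_iter f (- int (N - j) + int N) p" by (rule int_iter_add[OF bij])
    also have "- int (N - j) + int N = int j" using that by simp
    finally show ?thesis by (simp add: int_iter_nat)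
  qed
  have "\<forall>i\<le>n. \<forall>j\<le>N. dist ((f^^j) (u i)) ((f^^j) (u 0)) \<le> c"
  proof (intro allI impI)
    fix i j assume i: "i \<le> n" and j: "j \<le> N"
    have hb: "h (u i) = b" "h (u 0) = b" using uF[OF i] uF[of 0] by (auto simp: F_def)
    let ?k = "N - j"
    have "dist ((f^^j) (u i)) (int_iter f (- int ?k) (snd b)) < \<epsilon>"
    proof -
      have "bk ((f^^N) (u i)) = b" using hb(1) by (simp add: h_def)
      then show ?thesis using bk(2)[of ?k "(f^^N) (u i)"] backw[OF j, of "u i"]
        by (simp add: dist_commute)
    qed
    moreover have "dist ((f^^j) (u 0)) (int_iter f (- int ?k) (snd b)) < \<epsilon>"
    proof -
      have "bk ((f^^N) (u 0)) = b" using hb(2) by (simp add: h_def)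
      then show ?thesis using bk(2)[of ?k "(f^^N) (u 0)"] backw[OF j, of "u 0"]
        by (simp add: dist_commute)
    qed
    ultimately show "dist ((f^^j) (u i)) ((f^^j) (u 0)) \<le> c"
      using eps(2) dist_triangle2[of "(f^^j) (u i)" "(f^^j) (u 0)" "int_iter f (- int ?k) (snd b)"]
      by linarith
  qed
  then obtain i l where il: "i \<le> n" "l \<le> n" "i \<noteq> l" "dist (u i) (u l) < \<gamma>" using N by blast
  have "\<gamma> \<le> dist (u i) (u l)"
    using gle uF[OF il(1)] uF[OF il(2)] uinj[OF il(1-3)] by (auto simp: F_def)
  with il(4) show False by simp
qed

end
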